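(* Let $A$ be a complex vector space of dimension $n\ge2$, let $h$ be a symmetric bilinear form on $A$, let $c\in A$ with $h(\cdot,c)\ne0$, and define $x*y=h(x,c)y+h(x,y)c$. If $h(c,c)\neq0$, then $(A,* )$ is isomorphic to $A^1_{(3)}$ or to $A^{(k),2}_{(3)}$ for some $k\in\{0,\dots,n-2\}$. If $h(c,c)=0$, then $(A,* )$ is isomorphic to $A^{(k),3}_{(3)}$ for some $k\in\{0,\dots,n-2\}$.
   Context: All algebras have basis $e_1,\dots,e_n$ and only the listed products of basis vectors are nonzero. $A^1_{(3)}$: $e_1e_1=2e_1$, $e_1e_j=e_j$, $e_je_j=e_1$ ($j=2,\dots,n$). $A^{(k),2}_{(3)}$ ($0\le k\le n-2$): $e_1e_1=2e_1$, $e_1e_j=e_j$ ($j=2,\dots,n$), $e_le_l=e_1$ ($l=3,\dots,k+2$). $A^{(k),3}_{(3)}$ ($0\le k\le n-2$): $e_1e_2=e_1$, $e_2e_1=2e_1$, $e_2e_2=e_2$, $e_2e_j=e_j$ ($j=3,\dots,n$), $e_le_l=e_1$ ($l=3,\dots,k+2$). *)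

theory Defs
  imports Main Complex_Main
begin

text \<open>Structure constants of the model algebras on basis e_1..e_n:
  e_i e_j = sum over k of T i j k e_k.\<close>

definition A1_const :: "nat \<Rightarrow> nat \<Rightarrow> nat \<Rightarrow> nat \<Rightarrow> complex" where
  "A1_const n i j k =
     (if i = 1 \<and> j = 1 then (if k = 1 then 2 else 0)
      else if i = 1 \<and> 2 \<le> j \<and> j \<le> n then (if k = j then 1 else 0)
      else if i = j \<and> 2 \<le> j \<and> j \<le> n then (if k = 1 then 1 else 0)
      else 0)"

definition A2_const :: "nat \<Rightarrow> nat \<Rightarrow> nat \<Rightarrow> nat \<Rightarrow> nat \<Rightarrow> complex" where
  "A2_const n m i j k =
     (if i = 1 \<and> j = 1 then (if k = 1 then 2 else 0)
      else if i = 1 \<and> 2 \<le> j \<and> j \<le> n then (if k = j then 1 else 0)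
      else if i = j \<and> 3 \<le> j \<and> j \<le> m + 2 then (if k = 1 then 1 else 0)
      else 0)"

definition A3_const :: "nat \<Rightarrow> nat \<Rightarrow> nat \<Rightarrow> nat \<Rightarrow> nat \<Rightarrow> complex" where
  "A3_const n m i j k =
     (if i = 1 \<and> j = 2 then (if k = 1 then 1 else 0)
      else if i = 2 \<and> j = 1 then (if k = 1 then 2 else 0)
      else if i = 2 \<and> j = 2 then (if k = 2 then 1 else 0)
      else if i = 2 \<and> 3 \<le> j \<and> j \<le> n then (if k = j then 1 else 0)
      else if i = j \<and> 3 \<le> j \<and> j \<le> m + 2 then (if k = 1 then 1 else 0)
      else 0)"

definition iso_to_model ::
  "(complex \<Rightarrow> 'a::ab_group_add \<Rightarrow> 'a) \<Rightarrow> ('a \<Rightarrow> 'a \<Rightarrow> 'a) \<Rightarrow> nat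
     \<Rightarrow> (nat \<Rightarrow> nat \<Rightarrow> nat \<Rightarrow> complex) \<Rightarrow> bool" where
  "iso_to_model scale mult n T \<longleftrightarrow>
     (\<exists>b :: nat \<Rightarrow> 'a.
        inj_on b {1..n} \<and>
        module.independent scale (b ` {1..n}) \<and>
        module.span scale (b ` {1..n}) = UNIV \<and>
        (\<forall>i\<in>{1..n}. \<forall>j\<in>{1..n}.
            mult (b i) (b j) = (\<Sum>k = 1..n. scale (T i j k) (b k))))"

definition sym_bilinear_form ::
  "(complex \<Rightarrow> 'a::ab_group_add \<Rightarrow> 'a) \<Rightarrow> ('a \<Rightarrow> 'a \<Rightarrow> complex) \<Rightarrow> bool" where
  "sym_bilinear_form scale h \<longleftrightarrow>
     (\<forall>x y. h x y = h y x) \<and>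
     (\<forall>x y z. h (x + y) z = h x z + h y z) \<and>
     (\<forall>a x z. h (scale a x) z = a * h x z)"

end

theory Submission imports Defs begin

locale cvs = vector_space scale for scale :: "complex \<Rightarrow> 'b::ab_group_add \<Rightarrow> 'b"
begin

lemma bil:
  assumes "sym_bilinear_form scale h"
  shows bil_sym: "h x y = h y x"
    and bil_addL: "h (x + y) z = h x z + h y z"
    and bil_addR: "h z (x + y) = h z x + h z y"
    and bil_scaleL: "h (scale a x) z = a * h x z"
    and bil_scaleR: "h z (scale a x) = a * h z x"
    and bil_0L: "h 0 z = 0"
    and bil_0R: "h z 0 = 0"
    and bil_diffL: "h (x - y) z = h x z - h y z"
    and bil_diffR: "h z (x - y) = h z x - h z y"
proof -
  have s: "\<And>x y. h x y = h y x" and a: "\<And>x y z. h (x + y) z = h x z + h y z"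
    and m: "\<And>a x z. h (scale a x) z = a * h x z"
    using assms unfolding sym_bilinear_form_def by auto
  show "h x y = h y x" by (rule s)
  show "h (x + y) z = h x z + h y z" by (rule a)
  show "h z (x + y) = h z x + h z y" using a s by metis
  show "h (scale a x) z = a * h x z" by (rule m)
  show "h z (scale a x) = a * h z x" using m s by metis
  show z: "h 0 z = 0" using m[of 0 x z] by simp
  then show "h z 0 = 0" using s by metis
  have "h (x - y) z = h (x + scale (-1) y) z" by simp
  also have "\<dots> = h x z + (-1) * h y z" by (simp only: a m)
  also have "\<dots> = h x z - h y z" by simp
  finally show "h (x - y) z = h x z - h y z" .
  then show "h z (x - y) = h z x - h z y" using s by metis
qed

lemma span_orth:
  assumes "sym_bilinear_form scale h" "x \<in> span S" "\<And>s. s \<in> S \<Longrightarrow> h s v = 0"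
  shows "h x v = 0"
  using assms(2)
proof (induction rule: span_induct)
  case base
  show ?case unfolding subspace_def
    by (simp add: bil_0L[OF assms(1)] bil_addL[OF assms(1)] bil_scaleL[OF assms(1)])
next
  case (step x) then show ?case using assms(3) by auto
qed

lemma span_insert_cong: "span A = span B \<Longrightarrow> span (insert a A) = span (insert a B)"
  by (simp add: set_eq_iff span_breakdown_eq)

lemma proj_lemma:
  assumes hb: "sym_bilinear_form scale h" and v: "v \<in> span S" and hv: "h v v \<noteq> 0"
  defines "P \<equiv> (\<lambda>x. x - scale (h x v / h v v) v)"
  shows "span (insert v (P ` S)) = span S" "v \<notin> span (P ` S)"
    "\<And>y. y \<in> span (P ` S) \<Longrightarrow> h y v = 0"
proof -
  note B = bil[OF hb]
  have hP: "h (P x) v = 0" for x using hv unfolding P_def by (simp add: B)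
  show o: "\<And>y. y \<in> span (P ` S) \<Longrightarrow> h y v = 0"
    using span_orth[OF hb] hP by blast
  then show "v \<notin> span (P ` S)" using hv by blast
  show "span (insert v (P ` S)) = span S"
    unfolding span_eq
  proof
    show "insert v (P ` S) \<subseteq> span S"
      using v by (auto simp: P_def) (metis span_diff span_scale span_base)
    show "S \<subseteq> span (insert v (P ` S))"
    proof
      fix x assume "x \<in> S"
      have "x = P x + scale (h x v / h v v) v" unfolding P_def by simp
      moreover have "P x \<in> span (insert v (P ` S))" using \<open>x \<in> S\<close> by (intro span_base) auto
      moreover have "v \<in> span (insert v (P ` S))" by (intro span_base) auto
      ultimately show "x \<in> span (insert v (P ` S))" by (metis span_add span_scale)
    qed
  qed
qed

end

locale cfvs = finite_dimensional_vector_space scale Basis for scale :: "complex \<Rightarrow> 'b::ab_group_add \<Rightarrow> 'b" and Basis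
begin
sublocale cvs ..


lemma orth_basis:
  assumes hb: "sym_bilinear_form scale h"
  shows "finite S \<Longrightarrow> \<exists>W. finite W \<and> independent W \<and> span W = span S \<and>
           (\<forall>x\<in>W. \<forall>y\<in>W. x \<noteq> y \<longrightarrow> h x y = 0)"
proof (induction "dim S" arbitrary: S rule: less_induct)
  case less
  note B = bil[OF hb]
  show ?case
  proof (cases "\<exists>v\<in>span S. h v v \<noteq> 0")
    case False
    have z: "h x y = 0" if "x \<in> span S" "y \<in> span S" for x y
    proof -
      have "h (x + y) (x + y) = 0" using False that span_add by blast
      moreover have "h x x = 0" "h y y = 0" using False that by auto
      ultimately have "2 * h x y = 0" by (simp add: B algebra_simps)
      then show ?thesis by simp
    qed
    obtain W where W: "W \<subseteq> span S" "independent W" "span S \<subseteq> span W" "card W = dim (span S)"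
      using basis_exists by blast
    have sW: "span W = span S"
      by (metis W(1,3) span_eq span_superset subset_trans)
    show ?thesis
    proof (intro exI conjI)
      show "finite W" using W(2) by (rule finiteI_independent)
      show "independent W" by (rule W(2))
      show "span W = span S" by (rule sW)
      show "\<forall>x\<in>W. \<forall>y\<in>W. x \<noteq> y \<longrightarrow> h x y = 0"
        using W(1) z by blast
    qed
  next
    case True
    then obtain v where v: "v \<in> span S" "h v v \<noteq> 0" by blast
    define P where "P \<equiv> (\<lambda>x. x - scale (h x v / h v v) v)"
    note pl = proj_lemma[OF hb v, folded P_def]
    have "dim S = dim (insert v (P ` S))" using pl(1) by (metis span_eq_dim)
    also have "\<dots> = dim (P ` S) + 1" using pl(2) by (simp add: dim_insert)
    finally have "dim (P ` S) < dim S" by simp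
    then obtain W' where W': "finite W'" "independent W'" "span W' = span (P ` S)"
       "\<forall>x\<in>W'. \<forall>y\<in>W'. x \<noteq> y \<longrightarrow> h x y = 0"
      using less(1)[of "P ` S"] less(2) by blast
    have vW: "v \<notin> span W'" using pl(2) W'(3) by simp
    have vW2: "v \<notin> W'" using vW span_base by blast
    have ow: "h w v = 0" if "w \<in> W'" for w using pl(3) W'(3) that span_base by blast
    show ?thesis
    proof (intro exI conjI)
      show "finite (insert v W')" using W' by simp
      show "independent (insert v W')" using W'(2) vW vW2 by (simp add: independent_insert)
      show "span (insert v W') = span S" using span_insert_cong[OF W'(3)] pl(1) by simp
      show "\<forall>x\<in>insert v W'. \<forall>y\<in>insert v W'. x \<noteq> y \<longrightarrow> h x y = 0"
        using W'(4) ow B(1) by auto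
    qed
  qed
qed

end


lemma csqrt_sq: "csqrt z * csqrt z = z"
  using power2_csqrt[of z] by (simp add: power2_eq_square)

lemma enum_bij:
  assumes "finite W" "W1 \<subseteq> W" "finite J" "I \<subseteq> J" "card I = card W1" "card J = card W"
  shows "\<exists>g. bij_betw g J W \<and> (\<forall>j\<in>J. g j \<in> W1 \<longleftrightarrow> j \<in> I)"
proof -
  have fI: "finite I" "finite W1" using assms finite_subset by auto
  obtain g1 where g1: "bij_betw g1 I W1" using finite_same_card_bij[OF fI assms(5)] by blast
  have "card (J - I) = card (W - W1)"
    using assms fI by (simp add: card_Diff_subset)
  then obtain g0 where g0: "bij_betw g0 (J - I) (W - W1)"
    using finite_same_card_bij assms by (meson finite_Diff)
  define g where "g j = (if j \<in> I then g1 j else g0 j)" for j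
  have a: "bij_betw g I W1" using g1 by (rule bij_betw_cong[THEN iffD1, rotated]) (simp add: g_def)
  have b: "bij_betw g (J - I) (W - W1)" using g0 by (rule bij_betw_cong[THEN iffD1, rotated]) (simp add: g_def)
  have "bij_betw g (I \<union> (J - I)) (W1 \<union> (W - W1))"
    by (rule bij_betw_combine[OF a b]) auto
  moreover have "I \<union> (J - I) = J" "W1 \<union> (W - W1) = W" using assms by auto
  ultimately have "bij_betw g J W" by simp
  moreover have "\<forall>j\<in>J. g j \<in> W1 \<longleftrightarrow> j \<in> I"
    using a b by (auto simp: bij_betw_def)
  ultimately show ?thesis by blast
qed

lemma iso_intro:
  fixes scale :: "complex \<Rightarrow> 'a::ab_group_add \<Rightarrow> 'a" and b :: "nat \<Rightarrow> 'a"
  assumes fd: "finite_dimensional_vector_space scale B0" and dim: "vector_space.dim scale UNIV = n"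
    and sp: "module.span scale (b ` {1..n}) = UNIV"
    and tab: "\<forall>i\<in>{1..n}. \<forall>j\<in>{1..n}. \<exists>m\<in>{1..n}. \<exists>a. (\<forall>k. T i j k = (if k = m then a else 0))
                 \<and> mult (b i) (b j) = scale a (b m)"
  shows "iso_to_model scale mult n T"
proof -
  interpret V: finite_dimensional_vector_space scale B0 by (rule fd)
  have c1: "card (b ` {1..n}) \<le> n" using card_image_le[of "{1..n}" b] by simp
  have c2: "n \<le> card (b ` {1..n})" using V.dim_le_card[of UNIV "b ` {1..n}"] sp dim by simp
  have cn: "card (b ` {1..n}) = n" using c1 c2 by simp
  have inj: "inj_on b {1..n}" using cn by (simp add: inj_on_iff_eq_card)
  have ind: "V.independent (b ` {1..n})"
    using V.card_le_dim_spanning[of "b ` {1..n}" UNIV] sp dim cn by simp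
  have mt: "mult (b i) (b j) = (\<Sum>k = 1..n. scale (T i j k) (b k))"
    if ij: "i \<in> {1..n}" "j \<in> {1..n}" for i j
  proof -
    obtain m a where m: "m \<in> {1..n}" "\<forall>k. T i j k = (if k = m then a else 0)"
       "mult (b i) (b j) = scale a (b m)" using tab ij by blast
    have "(\<Sum>k = 1..n. scale (T i j k) (b k)) = (\<Sum>k = 1..n. if k = m then scale a (b m) else 0)"
      using m(2) by (intro sum.cong) auto
    also have "\<dots> = scale a (b m)" using m(1) by simp
    finally show ?thesis using m(3) by simp
  qed
  show ?thesis unfolding iso_to_model_def using inj ind sp mt by blast
qed



theorem proposition3p7:
  fixes scale :: "complex \<Rightarrow> 'a::ab_group_add \<Rightarrow> 'a"
    and h :: "'a \<Rightarrow> 'a \<Rightarrow> complex"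
    and c :: 'a
    and n :: nat
  assumes vs: "vector_space scale"
    and dim: "vector_space.dim scale (UNIV :: 'a set) = n"
    and n2: "2 \<le> n"
    and h: "sym_bilinear_form scale h"
    and hc: "\<exists>x. h x c \<noteq> 0"
  defines "mult \<equiv> (\<lambda>x y. scale (h x c) y + scale (h x y) c)"
  shows "(h c c \<noteq> 0 \<longrightarrow>
            iso_to_model scale mult n (A1_const n) \<or>
            (\<exists>k\<in>{0..n-2}. iso_to_model scale mult n (A2_const n k)))
       \<and> (h c c = 0 \<longrightarrow>
            (\<exists>k\<in>{0..n-2}. iso_to_model scale mult n (A3_const n k)))"
proof -
  interpret V: vector_space scale by (rule vs)
  define B0 where "B0 = (SOME b. V.independent b \<and> V.span b = V.span UNIV)"
  have ex: "\<exists>b. V.independent b \<and> V.span b = V.span UNIV"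
    using dim n2 unfolding V.dim_def by (metis not_numeral_le_zero)
  have B0: "V.independent B0" "V.span B0 = UNIV"
    using someI_ex[OF ex] unfolding B0_def[symmetric] by auto
  have cB0: "card B0 = n" using dim ex unfolding V.dim_def B0_def by simp
  have fB0: "finite B0" using cB0 n2 card.infinite by force
  have fd: "finite_dimensional_vector_space scale B0"
    by (intro finite_dimensional_vector_space.intro vs finite_dimensional_vector_space_axioms.intro fB0 B0)
  interpret FD: finite_dimensional_vector_space scale B0 by (rule fd)
  have cf: "cfvs scale B0" unfolding cfvs_def by (rule fd)
  have cv: "cvs scale" unfolding cvs_def by (rule vs)
  note B = cvs.bil[OF cv h]
  have multE: "mult x y = scale (h x c) y + scale (h x y) c" for x y by (simp add: mult_def)
  have two: "scale (2::complex) x = x + x" for x using V.scale_left_distrib[of 1 1 x] by simp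
  have dimU: "V.dim (UNIV :: 'a set) = n" by (rule dim)
  show ?thesis
  proof (intro conjI impI)
    assume al: "h c c \<noteq> 0"
    define P where "P \<equiv> (\<lambda>x. x - scale (h x c / h c c) c)"
    have cin: "c \<in> V.span B0" using B0 by simp
    note pl = cvs.proj_lemma[OF cv h cin al, folded P_def]
    have "n = V.dim (insert c (P ` B0))" using pl(1) B0(2) dimU by (metis V.span_eq_dim V.dim_span)
    also have "\<dots> = V.dim (P ` B0) + 1" using pl(2) by (simp add: FD.dim_insert)
    finally have dimS: "V.dim (P ` B0) = n - 1" by simp
    obtain W where W: "finite W" "V.independent W" "V.span W = V.span (P ` B0)"
       "\<forall>x\<in>W. \<forall>y\<in>W. x \<noteq> y \<longrightarrow> h x y = 0"
      using cfvs.orth_basis[OF cf h, of "P ` B0"] fB0 by blast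
    have cardW: "card W = n - 1" using V.dim_eq_card[OF W(3) W(2)] dimS by simp
    have Wc: "h w c = 0" if "w \<in> W" for w using pl(3) W(3) that V.span_base by blast
    have spanW: "V.span (insert c W) = UNIV"
      using cvs.span_insert_cong[OF cv W(3)] pl(1) B0(2) by simp
    define W1 where "W1 = {w\<in>W. h w w \<noteq> 0}"
    define k where "k = card W1"
    have W1W: "W1 \<subseteq> W" unfolding W1_def by auto
    have kle: "k \<le> n - 1" unfolding k_def using card_mono[OF W(1) W1W] cardW by simp
    have key: "iso_to_model scale mult n T"
      if I: "I \<subseteq> {2..n}" "card I = k"
        and T: "\<forall>i j l. T i j l = (if i = 1 \<and> j = 1 then (if l = 1 then 2 else 0)
                 else if i = 1 \<and> 2 \<le> j \<and> j \<le> n then (if l = j then 1 else 0)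
                 else if i = j \<and> j \<in> I then (if l = 1 then 1 else 0) else 0)"
      for I T
    proof -
      obtain g where g: "bij_betw g {2..n} W" "\<forall>j\<in>{2..n}. g j \<in> W1 \<longleftrightarrow> j \<in> I"
        using enum_bij[OF W(1) W1W _ I(1)] I(2) cardW k_def by auto
      define s where "s w = (if h w w \<noteq> 0 then 1 / csqrt (h c c * h w w) else 1)" for w
      define b where "b j = (if j = 1 then scale (1 / h c c) c else scale (s (g j)) (g j))" for j
      have s0: "s w \<noteq> 0" for w
        unfolding s_def using csqrt_sq[of "h c c * h w w"] al by auto
      have gW: "g j \<in> W" if "j \<in> {2..n}" for j using g(1) that by (auto simp: bij_betw_def)
      have hbc: "h (b j) c = (if j = 1 then 1 else 0)" if "j \<in> {1..n}" for j
        using that al Wc[OF gW, of j] by (auto simp: b_def B)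
      have hbb: "h (b i) (b j) = (if i = j \<and> (i = 1 \<or> i \<in> I) then 1 / h c c else 0)"
        if "i \<in> {1..n}" "j \<in> {1..n}" for i j
      proof (cases "i = 1")
        case True
        then show ?thesis
        proof (cases "j = 1")
          case True
          then show ?thesis using \<open>i = 1\<close> al by (simp add: b_def B power2_eq_square)
        next
          case False
          then have "j \<in> {2..n}" using that by auto
          then show ?thesis using \<open>i = 1\<close> False Wc[OF gW] by (simp add: b_def B)
        qed
      next
        case False
        then have i2: "i \<in> {2..n}" using that by auto
        show ?thesis
        proof (cases "j = 1")
          case True
          then show ?thesis using False Wc[OF gW[OF i2]] by (simp add: b_def B)
        next
          case j1: False
          then have j2: "j \<in> {2..n}" using that by auto
          show ?thesis
          proof (cases "i = j")
            case False
            then have "g i \<noteq> g j" using g(1) i2 j2 by (auto simp: bij_betw_def inj_on_def)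
            then show ?thesis using W(4) gW[OF i2] gW[OF j2] False \<open>i \<noteq> 1\<close> j1
              by (simp add: b_def B)
          next
            case True
            show ?thesis
            proof (cases "i \<in> I")
              case iI: True
              then have "h (g i) (g i) \<noteq> 0" using g(2) i2 unfolding W1_def by auto
              then have "s (g i) * s (g i) * h (g i) (g i) = 1 / h c c"
                unfolding s_def using csqrt_sq[of "h c c * h (g i) (g i)"] al by (simp add: field_simps)
              then show ?thesis using True iI \<open>i \<noteq> 1\<close> by (simp add: b_def B mult.assoc)
            next
              case nI: False
              then have "h (g i) (g i) = 0" using g(2) i2 gW[OF i2] unfolding W1_def by auto
              then show ?thesis using True nI \<open>i \<noteq> 1\<close> by (simp add: b_def B)
            qed
          qed
        qed
      qed
      have cb: "c = scale (h c c) (b 1)" using al by (simp add: b_def)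
      have sp: "V.span (b ` {1..n}) = UNIV"
      proof -
        have "insert c W \<subseteq> V.span (b ` {1..n})"
        proof
          fix x assume "x \<in> insert c W"
          then show "x \<in> V.span (b ` {1..n})"
          proof
            assume "x = c"
            then show ?thesis using cb n2 by (metis V.span_base V.span_scale atLeastAtMost_iff image_eqI one_le_numeral order_trans le_refl)
          next
            assume "x \<in> W"
            then obtain j where j: "j \<in> {2..n}" "x = g j" using g(1) by (auto simp: bij_betw_def)
            then have "x = scale (1 / s (g j)) (b j)" using s0 by (simp add: b_def)
            moreover have "b j \<in> V.span (b ` {1..n})" using j by (intro V.span_base) auto
            ultimately show ?thesis by (metis V.span_scale)
          qed
        qed
        then have "V.span (insert c W) \<subseteq> V.span (b ` {1..n})"
          by (metis V.span_mono V.span_span)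
        then show ?thesis using spanW by auto
      qed
      have tab: "\<forall>i\<in>{1..n}. \<forall>j\<in>{1..n}. \<exists>m\<in>{1..n}. \<exists>a. (\<forall>l. T i j l = (if l = m then a else 0))
                 \<and> mult (b i) (b j) = scale a (b m)"
      proof (intro ballI)
        fix i j assume ij: "i \<in> {1..n}" "j \<in> {1..n}"
        have m: "mult (b i) (b j) = scale (h (b i) c) (b j) + scale (h (b i) (b j) * h c c) (b 1)"
          using multE cb by (metis V.scale_scale mult.commute)
        have n1: "1 \<in> {1..n}" using n2 by auto
        show "\<exists>m\<in>{1..n}. \<exists>a. (\<forall>l. T i j l = (if l = m then a else 0)) \<and> mult (b i) (b j) = scale a (b m)"
        proof (cases "i = 1")
          case True
          show ?thesis
          proof (cases "j = 1")
            case True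
            then show ?thesis using \<open>i = 1\<close> m hbc[OF ij(1)] hbb[OF ij] al T n1
              by (intro bexI[of _ 1] exI[of _ 2]) (auto simp: two)
          next
            case False
            then show ?thesis using \<open>i = 1\<close> m hbc[OF ij(1)] hbb[OF ij] al T ij
              by (intro bexI[of _ j] exI[of _ 1]) auto
          qed
        next
          case False
          show ?thesis
          proof (cases "i = j \<and> j \<in> I")
            case True
            then show ?thesis using False m hbc[OF ij(1)] hbb[OF ij] al T n1
              by (intro bexI[of _ 1] exI[of _ 1]) auto
          next
            case nI: False
            then show ?thesis using False m hbc[OF ij(1)] hbb[OF ij] al T n1
              by (intro bexI[of _ 1] exI[of _ 0]) auto
          qed
        qed
      qed
      show ?thesis by (rule iso_intro[OF fd dim sp tab])
    qed
    show "iso_to_model scale mult n (A1_const n) \<or>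
            (\<exists>k\<in>{0..n-2}. iso_to_model scale mult n (A2_const n k))"
    proof (cases "k = n - 1")
      case True
      have "iso_to_model scale mult n (A1_const n)"
        by (rule key[of "{2..n}"]) (use True n2 in \<open>auto simp: A1_const_def\<close>)
      then show ?thesis by blast
    next
      case False
      then have kk: "k \<le> n - 2" using kle by simp
      have "iso_to_model scale mult n (A2_const n k)"
        by (rule key[of "{3..k+2}"]) (use kk n2 in \<open>auto simp: A2_const_def\<close>)
      then show ?thesis using kk by auto
    qed
  next
    assume al: "h c c = 0"
    obtain d where d: "h d c \<noteq> 0" using hc by blast
    define e where "e = scale (1 / h d c) d"
    have hec: "h e c = 1" using d by (simp add: e_def B)
    define f where "f = e - scale (h e e / 2) c"
    have hfc: "h f c = 1" using hec al by (simp add: f_def B)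
    have hcf: "h c f = 1" using hfc B(1) by metis
    have hce: "h c e = 1" using hec B(1) by metis
    have hef: "h e f = h e e / 2" using hec unfolding f_def by (simp only: B(9) B(5)) simp
    have hcf': "h c f = 1" using hce al unfolding f_def by (simp only: B(9) B(5)) simp
    have hff: "h f f = 0" unfolding f_def[of] by (simp only: B(8) B(4) hef[unfolded f_def] hcf'[unfolded f_def]) simp
    define Q where "Q x = x - scale (h x f) c - scale (h x c) f" for x
    have hQc: "h (Q x) c = 0" for x using hcf hfc al by (simp add: Q_def B)
    have hQf: "h (Q x) f = 0" for x using hcf hfc hff by (simp add: Q_def B)
    define Sp where "Sp = Q ` B0"
    have oc: "h y c = 0" if "y \<in> V.span Sp" for y
      using cvs.span_orth[OF cv h that] hQc unfolding Sp_def by blast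
    have of: "h y f = 0" if "y \<in> V.span (insert f Sp)" for y
      using cvs.span_orth[OF cv h that] hQf hff unfolding Sp_def by blast
    have fnot: "f \<notin> V.span Sp" using oc hfc by force
    have cnot: "c \<notin> V.span (insert f Sp)" using of hcf by force
    have spU: "V.span (insert c (insert f Sp)) = UNIV"
    proof -
      have "x \<in> V.span (insert c (insert f Sp))" if xB: "x \<in> B0" for x
      proof -
        have "x = Q x + scale (h x f) c + scale (h x c) f" by (simp add: Q_def)
        moreover have "Q x \<in> V.span (insert c (insert f Sp))" unfolding Sp_def
          using xB by (intro V.span_base) auto
        moreover have "c \<in> V.span (insert c (insert f Sp))" "f \<in> V.span (insert c (insert f Sp))"
          by (intro V.span_base; auto)+
        ultimately show ?thesis by (metis V.span_add V.span_scale)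
      qed
      then have "V.span B0 \<subseteq> V.span (insert c (insert f Sp))"
        by (metis V.span_mono V.span_span subsetI)
      then show ?thesis using B0(2) by auto
    qed
    have "n = V.dim (insert c (insert f Sp))" using spU dimU by (metis V.dim_span)
    also have "\<dots> = V.dim Sp + 2" using fnot cnot by (simp add: FD.dim_insert)
    finally have dimS: "V.dim Sp = n - 2" by simp
    have fSp: "finite Sp" unfolding Sp_def using fB0 by simp
    obtain W where W: "finite W" "V.independent W" "V.span W = V.span Sp"
       "\<forall>x\<in>W. \<forall>y\<in>W. x \<noteq> y \<longrightarrow> h x y = 0"
      using cfvs.orth_basis[OF cf h fSp] by blast
    have cardW: "card W = n - 2" using V.dim_eq_card[OF W(3) W(2)] dimS by simp
    have Wc: "h w c = 0" if "w \<in> W" for w using oc W(3) that V.span_base by blast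
    have Wf: "h w f = 0" if "w \<in> W" for w using of W(3) that V.span_base V.span_mono
      by (metis subsetD subset_insertI)
    have spanW: "V.span (insert c (insert f W)) = UNIV"
      using cvs.span_insert_cong[OF cv cvs.span_insert_cong[OF cv W(3)]] spU by simp
    define W1 where "W1 = {w\<in>W. h w w \<noteq> 0}"
    define k where "k = card W1"
    have W1W: "W1 \<subseteq> W" unfolding W1_def by auto
    have kle: "k \<le> n - 2" unfolding k_def using card_mono[OF W(1) W1W] cardW by simp
    define I where "I = {3..k+2}"
    have I: "I \<subseteq> {3..n}" "card I = k" using kle n2 unfolding I_def by auto
    obtain g where g: "bij_betw g {3..n} W" "\<forall>j\<in>{3..n}. g j \<in> W1 \<longleftrightarrow> j \<in> I"
      using enum_bij[OF W(1) W1W _ I(1)] I(2) cardW k_def by auto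
    define s where "s w = (if h w w \<noteq> 0 then 1 / csqrt (h w w) else 1)" for w
    define b where "b j = (if j = 1 then c else if j = 2 then f else scale (s (g j)) (g j))" for j
    have s0: "s w \<noteq> 0" for w
      unfolding s_def using csqrt_sq[of "h w w"] by auto
    have gW: "g j \<in> W" if "j \<in> {3..n}" for j using g(1) that by (auto simp: bij_betw_def)
    have hbc: "h (b j) c = (if j = 2 then 1 else 0)" if "j \<in> {1..n}" for j
      using that al hfc Wc[OF gW, of j] by (auto simp: b_def B(2-9))
    have hbf: "h (b j) f = (if j = 1 then 1 else 0)" if "j \<in> {3..n}" for j
      using that Wf[OF gW, of j] by (auto simp: b_def B(2-9))
    have hbb: "h (b i) (b j) = (if (i = 1 \<and> j = 2) \<or> (i = 2 \<and> j = 1) \<or> (i = j \<and> i \<in> I) then 1 else 0)"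
      if ij: "i \<in> {1..n}" "j \<in> {1..n}" for i j
    proof -
      have I3: "i \<in> I \<Longrightarrow> i \<ge> 3" using I(1) by auto
      consider "i = 1" | "i = 2" | "i \<in> {3..n}" using ij by force
      then show ?thesis
      proof cases
        case 1
        consider "j = 1" | "j = 2" | "j \<in> {3..n}" using ij by force
        then show ?thesis
        proof cases
          case 3 then show ?thesis using \<open>i = 1\<close> Wc[OF gW[OF 3]] B(1)[of c "g j"] by (simp add: b_def B(2-9))
        qed (use \<open>i = 1\<close> al hcf I3 in \<open>auto simp: b_def\<close>)
      next
        case 2
        consider "j = 1" | "j = 2" | "j \<in> {3..n}" using ij by force
        then show ?thesis
        proof cases
          case 3 then show ?thesis using \<open>i = 2\<close> Wf[OF gW[OF 3]] B(1)[of f "g j"] by (simp add: b_def B(2-9))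
        qed (use \<open>i = 2\<close> hff hfc I3 in \<open>auto simp: b_def\<close>)
      next
        case i3: 3
        consider "j = 1" | "j = 2" | "j \<in> {3..n}" using ij by force
        then show ?thesis
        proof cases
          case 1 then show ?thesis using i3 Wc[OF gW[OF i3]] by (simp add: b_def B(2-9))
        next
          case 2 then show ?thesis using i3 Wf[OF gW[OF i3]] by (simp add: b_def B(2-9))
        next
          case j3: 3
          show ?thesis
          proof (cases "i = j")
            case False
            then have "g i \<noteq> g j" using g(1) i3 j3 by (auto simp: bij_betw_def inj_on_def)
            then show ?thesis using W(4) gW[OF i3] gW[OF j3] False i3 j3
              by (simp add: b_def B(2-9))
          next
            case True
            show ?thesis
            proof (cases "i \<in> I")
              case iI: True
              then have "h (g i) (g i) \<noteq> 0" using g(2) i3 unfolding W1_def by auto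
              then have "s (g i) * s (g i) * h (g i) (g i) = 1"
                unfolding s_def using csqrt_sq[of "h (g i) (g i)"] by (simp add: field_simps)
              then show ?thesis using True iI i3 by (simp add: b_def B mult.assoc)
            next
              case nI: False
              then have "h (g i) (g i) = 0" using g(2) i3 gW[OF i3] unfolding W1_def by auto
              then show ?thesis using True nI i3 by (simp add: b_def B(2-9))
            qed
          qed
        qed
      qed
    qed
    have cb: "c = b 1" by (simp add: b_def)
    have sp: "V.span (b ` {1..n}) = UNIV"
    proof -
      have "insert c (insert f W) \<subseteq> V.span (b ` {1..n})"
      proof
        fix x assume "x \<in> insert c (insert f W)"
        then consider "x = c" | "x = f" | "x \<in> W" by blast
        then show "x \<in> V.span (b ` {1..n})"
        proof cases
          case 1
          then have "x = b 1" by (simp add: b_def)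
          then show ?thesis using n2 by (intro V.span_base) auto
        next
          case 2
          then have "x = b 2" by (simp add: b_def)
          then show ?thesis using n2 by (intro V.span_base) auto
        next
          case 3
          then obtain j where j: "j \<in> {3..n}" "x = g j" using g(1) by (auto simp: bij_betw_def)
          then have "x = scale (1 / s (g j)) (b j)" using s0 by (simp add: b_def)
          moreover have "b j \<in> V.span (b ` {1..n})" using j by (intro V.span_base) auto
          ultimately show ?thesis by (metis V.span_scale)
        qed
      qed
      then have "V.span (insert c (insert f W)) \<subseteq> V.span (b ` {1..n})"
        by (metis V.span_mono V.span_span)
      then show ?thesis using spanW by auto
    qed
    have tab: "\<forall>i\<in>{1..n}. \<forall>j\<in>{1..n}. \<exists>m\<in>{1..n}. \<exists>a. (\<forall>l. A3_const n k i j l = (if l = m then a else 0))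
               \<and> mult (b i) (b j) = scale a (b m)"
    proof (intro ballI)
      fix i j assume ij: "i \<in> {1..n}" "j \<in> {1..n}"
      have m: "mult (b i) (b j) = scale (h (b i) c) (b j) + scale (h (b i) (b j)) (b 1)"
        using multE cb by metis
      have n1: "1 \<in> {1..n}" and n22: "2 \<in> {1..n}" using n2 by auto
      note hh = hbc[OF ij(1)] hbb[OF ij]
      have I3: "i \<in> I \<Longrightarrow> i \<ge> 3" using I(1) by auto
      show "\<exists>m\<in>{1..n}. \<exists>a. (\<forall>l. A3_const n k i j l = (if l = m then a else 0)) \<and> mult (b i) (b j) = scale a (b m)"
      proof (cases "i = 2")
        case True
        consider "j = 1" | "j = 2" | "j \<ge> 3" using ij by force
        then show ?thesis
        proof cases
          case 1 then show ?thesis using True m hh n1 I3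
            by (intro bexI[of _ 1] exI[of _ 2]) (auto simp: two A3_const_def)
        next
          case 2 then show ?thesis using True m hh n22 I3
            by (intro bexI[of _ 2] exI[of _ 1]) (auto simp: A3_const_def)
        next
          case 3 then show ?thesis using True m hh ij I3
            by (intro bexI[of _ j] exI[of _ 1]) (auto simp: A3_const_def)
        qed
      next
        case i2: False
        show ?thesis
        proof (cases "(i = 1 \<and> j = 2) \<or> (i = j \<and> j \<in> I)")
          case True
          then show ?thesis using i2 m hh n1 I3
            by (intro bexI[of _ 1] exI[of _ 1]) (auto simp: A3_const_def I_def)
        next
          case False
          then show ?thesis using i2 m hh n1 I3
            by (intro bexI[of _ 1] exI[of _ 0]) (auto simp: A3_const_def I_def)
        qed
      qed
    qed
    have "iso_to_model scale mult n (A3_const n k)" by (rule iso_intro[OF fd dim sp tab])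
    then show "\<exists>k\<in>{0..n-2}. iso_to_model scale mult n (A3_const n k)" using kle by auto
  qed
qed

end
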